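(* Assume the Schanuel conjecture. Let $b\in\overline{\mathbb{Q}}\setminus\{0,1\}$ with a fixed logarithm $\ln b$, and let $a_1,\dots,a_m$ be a ladder with respect to $b$ such that $1,a_1,\dots,a_m$ are linearly independent over $\mathbb{Q}$. Then for each $k=1,\dots,m$ exactly one of $a_k,\,b^{a_k}$ is transcendental over $F_{k-1}$; denoting it $b_k$, the numbers $\ln b,b_1,\dots,b_m$ are algebraically independent over $\mathbb{Q}$. In particular $\ln b\notin\overline{F_m}$.
   Context: Schanuel conjecture: if $z_1,\dots,z_n\in\mathbb{C}$ are linearly independent over $\mathbb{Q}$, then the field $\mathbb{Q}(z_1,\dots,z_n,e^{z_1},\dots,e^{z_n})$ has transcendence degree at least $n$ over $\mathbb{Q}$ (at least $n$ of these $2n$ numbers are algebraically independent over $\mathbb{Q}$). $b^x:=e^{x\ln b}$ for the fixed nonzero value $\ln b$. $\overline{F}$ denotes the algebraic closure in $\mathbb{C}$ of a field $F$. Ladder: for $a_1,\dots,a_m\in\mathbb{C}$ put $F_0:=\mathbb{Q}$ and $F_k:=\mathbb{Q}(a_1,\dots,a_k,b^{a_1},\dots,b^{a_k})$; the sequence is a ladder if for every $1\le k\le m$, $a_k\in\overline{F_{k-1}}$ or $b^{a_k}\in\overline{F_{k-1}}$. *)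

theory Defs
  imports "HOL-Analysis.Analysis" "HOL-Computational_Algebra.Polynomial" "HOL-Library.Poly_Mapping"
begin

definition mpoly_eval :: "((nat \<Rightarrow>\<^sub>0 nat) \<Rightarrow>\<^sub>0 rat) \<Rightarrow> (nat \<Rightarrow> complex) \<Rightarrow> complex" where
  "mpoly_eval p x = (\<Sum>\<mu>\<in>Poly_Mapping.keys p. of_rat (Poly_Mapping.lookup p \<mu>) * (\<Prod>i\<in>Poly_Mapping.keys \<mu>. x i ^ Poly_Mapping.lookup \<mu> i))"

definition alg_indep_Q :: "nat set \<Rightarrow> (nat \<Rightarrow> complex) \<Rightarrow> bool" where
  "alg_indep_Q I x \<longleftrightarrow>
     (\<forall>p. (\<forall>mon\<in>Poly_Mapping.keys p. Poly_Mapping.keys mon \<subseteq> I) \<longrightarrow> mpoly_eval p x = 0 \<longrightarrow> p = 0)"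

definition lin_indep_Q :: "nat \<Rightarrow> (nat \<Rightarrow> complex) \<Rightarrow> bool" where
  "lin_indep_Q n z \<longleftrightarrow>
     (\<forall>q :: nat \<Rightarrow> rat. (\<Sum>i<n. of_rat (q i) * z i) = 0 \<longrightarrow> (\<forall>i<n. q i = 0))"

definition Schanuel_conjecture :: bool where
  "Schanuel_conjecture \<longleftrightarrow>
     (\<forall>n (z :: nat \<Rightarrow> complex). lin_indep_Q n z \<longrightarrow>
        (\<exists>S \<subseteq> {..<2*n}. card S = n \<and>
           alg_indep_Q S (\<lambda>i. if i < n then z i else exp (z (i - n)))))"

definition subfield_C :: "complex set \<Rightarrow> bool" where
  "subfield_C F \<longleftrightarrow> 0 \<in> F \<and> 1 \<in> F \<and> (\<forall>x\<in>F. \<forall>y\<in>F. x + y \<in> F \<and> x * y \<in> F)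
      \<and> (\<forall>x\<in>F. - x \<in> F \<and> inverse x \<in> F)"

definition gen_field :: "complex set \<Rightarrow> complex set" where
  "gen_field S = \<Inter> {F. subfield_C F \<and> S \<subseteq> F}"

definition alg_over :: "complex set \<Rightarrow> complex \<Rightarrow> bool" where
  "alg_over F x \<longleftrightarrow> (\<exists>p :: complex poly. p \<noteq> 0 \<and> (\<forall>i. coeff p i \<in> F) \<and> poly p x = 0)"

text \<open>b^x := exp (x * L) for the fixed logarithm L of b.
  F_k = Q(a_1..a_k, b^a_1..b^a_k).\<close>
definition cpow_L :: "complex \<Rightarrow> complex \<Rightarrow> complex" where
  "cpow_L L x = exp (x * L)"

definition ladder_field :: "complex \<Rightarrow> (nat \<Rightarrow> complex) \<Rightarrow> nat \<Rightarrow> complex set" where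
  "ladder_field L a k = gen_field (a ` {1..k} \<union> (\<lambda>i. cpow_L L (a i)) ` {1..k})"

definition is_ladder :: "complex \<Rightarrow> (nat \<Rightarrow> complex) \<Rightarrow> nat \<Rightarrow> bool" where
  "is_ladder L a m \<longleftrightarrow> (\<forall>k\<in>{1..m}. alg_over (ladder_field L a (k - 1)) (a k)
                                  \<or> alg_over (ladder_field L a (k - 1)) (cpow_L L (a k)))"

end

theory Submission
  imports Defs "HOL-Algebra.Algebraic_Closure_Type"
begin


abbreviation CR :: "complex ring" where "CR \<equiv> ring_of_type_algebra"

lemma field_CR: "field CR" by (rule field_from_type_algebra)
lemma domain_CR: "domain CR" using field_CR field.axioms(1) by blast
lemma ring_CR: "ring CR" using field_CR by (simp add: cring.axioms(1) domain.axioms(1) field.axioms(1))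
lemma cring_CR: "cring CR" using field_CR by (simp add: domain.axioms(1) field.axioms(1))

lemma CR_simps[simp]: "carrier CR = UNIV" "(\<otimes>\<^bsub>CR\<^esub>) = (*)" "(\<oplus>\<^bsub>CR\<^esub>) = (+)"
  "\<zero>\<^bsub>CR\<^esub> = 0" "\<one>\<^bsub>CR\<^esub> = 1"
  by (auto simp: ring_of_type_algebra_def)

lemma CR_pow[simp]: "x [^]\<^bsub>CR\<^esub> (n::nat) = x ^ n"
  by (induction n) auto

lemma CR_uminus[simp]: "\<ominus>\<^bsub>CR\<^esub> x = - x"
  using abelian_group.minus_equality[OF ring.is_abelian_group[OF ring_CR], of "-x" x] by simp

lemma CR_inv[simp]: "x \<noteq> 0 \<Longrightarrow> inv\<^bsub>CR\<^esub> x = inverse x"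
  using comm_monoid.comm_inv_char[OF cring.axioms(2)[OF cring_CR], of x "inverse x"] by simp

definition algS :: "complex set \<Rightarrow> complex \<Rightarrow> bool" where
 "algS K x \<longleftrightarrow> (\<exists>N c. (\<forall>i<N. c i \<in> K) \<and> (\<exists>i<N. c i \<noteq> 0) \<and> (\<Sum>i<N. c i * x^i) = 0)"

lemma poly_sum_bound:
  fixes x :: complex
  assumes "Polynomial.degree p < N"
  shows "poly p x = (\<Sum>i<N. Polynomial.coeff p i * x^i)"
proof -
  have "poly p x = (\<Sum>i\<le>Polynomial.degree p. Polynomial.coeff p i * x^i)" by (rule poly_altdef)
  also have "\<dots> = (\<Sum>i<N. Polynomial.coeff p i * x^i)"
    by (rule sum.mono_neutral_left) (use assms coeff_eq_0 le_degree in auto)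
  finally show ?thesis .
qed

lemma alg_over_algS:
  assumes "0 \<in> K"
  shows "alg_over K x \<longleftrightarrow> algS K x"
proof
  assume "alg_over K x"
  then obtain p where p: "p \<noteq> 0" "\<forall>i. Polynomial.coeff p i \<in> K" "poly p x = 0"
    unfolding alg_over_def by auto
  show "algS K x" unfolding algS_def
  proof (rule exI[of _ "Suc (Polynomial.degree p)"], rule exI[of _ "Polynomial.coeff p"], intro conjI)
    show "\<forall>i<Suc (Polynomial.degree p). Polynomial.coeff p i \<in> K" using p by auto
    show "\<exists>i<Suc (Polynomial.degree p). Polynomial.coeff p i \<noteq> 0"
      using p(1) leading_coeff_0_iff[of p] by (intro exI[of _ "Polynomial.degree p"]) auto
    show "(\<Sum>i<Suc (Polynomial.degree p). Polynomial.coeff p i * x^i) = 0"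
      using poly_sum_bound[of p "Suc (Polynomial.degree p)" x] p(3) by simp
  qed
next
  assume "algS K x"
  then obtain N c where c: "\<forall>i<N. c i \<in> K" "\<exists>i<N. c i \<noteq> 0" "(\<Sum>i<N. c i * x^i) = 0"
    unfolding algS_def by auto
  define p where "p = Poly (map c [0..<N])"
  have cp: "Polynomial.coeff p i = (if i < N then c i else 0)" for i
    unfolding p_def by (auto simp: nth_default_def)
  have "p \<noteq> 0" using c(2) cp by (metis coeff_0)
  moreover have "\<forall>i. Polynomial.coeff p i \<in> K" using cp c(1) assms by auto
  moreover have "Polynomial.degree p < N"
  proof -
    obtain i where "i < N" "c i \<noteq> 0" using c(2) by auto
    hence "N > 0" by auto
    have "Polynomial.degree p \<le> N - 1" by (rule degree_le) (auto simp: cp)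
    thus ?thesis using \<open>N > 0\<close> by auto
  qed
  hence "poly p x = 0" using poly_sum_bound[of p N x] c(3) cp by simp
  ultimately show "alg_over K x" unfolding alg_over_def by auto
qed

lemma CR_eval_Nil[simp]: "ring.eval CR [] x = 0"
  using ring.eval.simps(1)[OF ring_CR] by simp
lemma CR_eval_Cons[simp]: "ring.eval CR (a#p) x = a * x^(length p) + ring.eval CR p x"
  using ring.eval.simps(2)[OF ring_CR] by simp
lemma CR_coeff_Nil[simp]: "ring.coeff CR [] i = 0"
  using ring.coeff.simps(1)[OF ring_CR] by simp
lemma CR_coeff_Cons[simp]: "ring.coeff CR (a#p) i = (if i = length p then a else ring.coeff CR p i)"
  using ring.coeff.simps(2)[OF ring_CR] by simp

lemma CR_normalize_Nil[simp]: "ring.normalize CR [] = []"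
  using ring.normalize.simps(1)[OF ring_CR] by simp
lemma CR_normalize_Cons[simp]: "ring.normalize CR (a#q) = (if a \<noteq> 0 then a#q else ring.normalize CR q)"
  using ring.normalize.simps(2)[OF ring_CR] by simp

lemma CR_eval: "(ring.eval CR) p x = (\<Sum>i<length p. (ring.coeff CR) p i * x^i)"
proof (induction p)
  case Nil
  then show ?case by simp
next
  case (Cons a p)
  have "(ring.eval CR) (a # p) x = a * x ^ length p + (ring.eval CR) p x" by simp
  also have "\<dots> = a * x ^ length p + (\<Sum>i<length p. (ring.coeff CR) p i * x^i)" using Cons by simp
  also have "\<dots> = (\<Sum>i<Suc (length p). (ring.coeff CR) (a # p) i * x^i)"
    by (simp add: add.commute)
  finally show ?case by simp
qed

lemma subfield_C_CR: "subfield_C K \<Longrightarrow> subfield K CR"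
  unfolding subfield_C_def
  by (intro field.subfieldI'[OF field_CR] ring.subringI[OF ring_CR]) auto

lemma CR_subfield_C: "subfield K CR \<Longrightarrow> subfield_C K"
proof -
  assume K: "subfield K CR"
  note E = subringE[OF subfieldE(1)[OF K], simplified]
  have "inverse k \<in> K" if "k \<in> K" for k
  proof (cases "k = 0")
    case True then show ?thesis using E by simp
  next
    case False then show ?thesis using ring.subfield_m_inv(1)[OF ring_CR K, of k] that by simp
  qed
  then show ?thesis unfolding subfield_C_def using E by auto
qed

lemma CR_alg_algS:
  assumes K: "subfield K CR"
  shows "\<not> (ring.transcendental CR) K x \<longleftrightarrow> algS K x"
proof
  assume "\<not> (ring.transcendental CR) K x"
  then obtain p where p: "p \<in> carrier (K[X]\<^bsub>CR\<^esub>)" "p \<noteq> []" "(ring.eval CR) p x = 0"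
    using domain.algebraicE[OF domain_CR subfieldE(1)[OF K], of x] by (auto simp: over_def)
  have pol: "polynomial\<^bsub>CR\<^esub> K p" using p(1) by (simp add: univ_poly_carrier)
  have setp: "set p \<subseteq> K" using ring.polynomial_incl[OF ring_CR pol] .
  show "algS K x" unfolding algS_def
  proof (rule exI[of _ "length p"], rule exI[of _ "ring.coeff CR p"], intro conjI)
    show "\<forall>i<length p. (ring.coeff CR) p i \<in> K"
      using setp by (auto simp: ring.coeff_nth[OF ring_CR])
    have "(ring.coeff CR) p (length p - 1) = hd p"
      using p(2) by (cases p) auto
    moreover have "hd p \<noteq> 0" using pol p(2) unfolding polynomial_def by auto
    ultimately show "\<exists>i<length p. (ring.coeff CR) p i \<noteq> 0"
      using p(2) by (intro exI[of _ "length p - 1"]) auto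
    show "(\<Sum>i<length p. (ring.coeff CR) p i * x^i) = 0" using p(3) CR_eval by simp
  qed
next
  assume "algS K x"
  then obtain N c where c: "\<forall>i<N. c i \<in> K" "\<exists>i<N. c i \<noteq> 0" "(\<Sum>i<N. c i * x^i) = 0"
    unfolding algS_def by auto
  define q where "q = rev (map c [0..<N])"
  have lq: "length q = N" by (simp add: q_def)
  have cq: "(ring.coeff CR) q i = c i" if "i < N" for i
    using that by (simp add: ring.coeff_nth[OF ring_CR] lq q_def rev_nth)
  have evq: "(ring.eval CR) q x = 0"
    using CR_eval[of q x] c(3) cq lq by simp
  have setq: "set q \<subseteq> K" using c(1) by (auto simp: q_def)
  have "(ring.normalize CR) q \<noteq> []"
  proof
    assume "(ring.normalize CR) q = []"
    have "set q \<subseteq> {0}" if "(ring.normalize CR) q = []" for q :: "complex list"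
      using that by (induction q) (auto split: if_splits)
    with \<open>(ring.normalize CR) q = []\<close> have "set q \<subseteq> {0}" by blast
    thus False using c(2) by (force simp: q_def)
  qed
  moreover have "(ring.normalize CR) q \<in> carrier (K[X]\<^bsub>CR\<^esub>)"
    using ring.normalize_gives_polynomial[OF ring_CR setq] by (simp add: univ_poly_carrier)
  moreover have "(ring.eval CR) ((ring.normalize CR) q) x = 0"
    using ring.eval_normalize[OF ring_CR, of q x] evq by simp
  ultimately show "\<not> (ring.transcendental CR) K x"
    using ring.algebraicI[OF ring_CR, of "(ring.normalize CR) q" K x] by (auto simp: over_def)
qed

lemma CR_alg_trans:
  assumes K: "subfield K CR" and F: "subfield F CR"
    and algF: "\<forall>y\<in>F. \<not> (ring.transcendental CR) K y" and x: "\<not> (ring.transcendental CR) F x"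
  shows "\<not> (ring.transcendental CR) K x"
proof -
  obtain p where p: "p \<in> carrier (F[X]\<^bsub>CR\<^esub>)" "p \<noteq> []" "(ring.eval CR) p x = 0"
    using domain.algebraicE[OF domain_CR subfieldE(1)[OF F], of x] x by (auto simp: over_def)
  have pol: "polynomial\<^bsub>CR\<^esub> F p" using p(1) by (simp add: univ_poly_carrier)
  have setp: "set p \<subseteq> F" using ring.polynomial_incl[OF ring_CR pol] .
  define E where "E = (ring.finite_extension CR) K p"
  have algp: "\<And>y. y \<in> set p \<Longrightarrow> ((\<lambda>K x. \<not> ring.transcendental CR K x) over K) y"
    using algF setp by (auto simp: over_def)
  have E: "subfield E CR"
    unfolding E_def by (rule domain.finite_extension_is_subfield[OF domain_CR K _ algp]) auto
  have fdE: "(ring.finite_dimension CR) K E"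
    unfolding E_def by (rule domain.finite_extension_finite_dimension(1)[OF domain_CR K _ algp]) auto
  have pE: "set p \<subseteq> E" unfolding E_def
    by (rule domain.finite_extension_mem[OF domain_CR subfieldE(1)[OF K]]) auto
  have "polynomial\<^bsub>CR\<^esub> E p" using pol pE unfolding polynomial_def by auto
  hence "\<not> ring.transcendental CR E x"
    using ring.algebraicI[OF ring_CR, of p E x] p by (auto simp: univ_poly_carrier over_def)
  hence "(ring.finite_dimension CR) E ((ring.simple_extension CR) E x)"
    using domain.finite_dimension_simple_extension[OF domain_CR E, of x] by (simp add: over_def)
  hence "(ring.finite_dimension CR) K ((ring.simple_extension CR) E x)"
    using ring.telescopic_base_dim(1)[OF ring_CR K E fdE] by blast
  moreover have "subring ((ring.simple_extension CR) E x) CR"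
    using domain.simple_extension_is_subring[OF domain_CR subfieldE(1)[OF E]] by simp
  moreover have "x \<in> (ring.simple_extension CR) E x"
    using ring.simple_extension_mem[OF ring_CR subfieldE(1)[OF E]] by simp
  ultimately have "((\<lambda>K x. \<not> ring.transcendental CR K x) over K) x"
    using ring.finite_dimension_imp_algebraic[OF ring_CR K] by blast
  thus ?thesis by (simp add: over_def)
qed

lemma subfield_C_zero: "subfield_C K \<Longrightarrow> 0 \<in> K" by (simp add: subfield_C_def)

lemma alg_over_trans:
  assumes K: "subfield_C K" and F: "subfield_C F"
    and algF: "\<forall>y\<in>F. alg_over K y" and x: "alg_over F x"
  shows "alg_over K x"
proof -
  note KC = subfield_C_CR[OF K] and FC = subfield_C_CR[OF F]
  have "\<forall>y\<in>F. \<not> (ring.transcendental CR) K y"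
    using algF alg_over_algS[OF subfield_C_zero[OF K]] CR_alg_algS[OF KC] by blast
  moreover have "\<not> (ring.transcendental CR) F x"
    using x alg_over_algS[OF subfield_C_zero[OF F]] CR_alg_algS[OF FC] by blast
  ultimately have "\<not> (ring.transcendental CR) K x" using CR_alg_trans[OF KC FC] by blast
  thus ?thesis using alg_over_algS[OF subfield_C_zero[OF K]] CR_alg_algS[OF KC] by blast
qed

lemma subfield_C_algebraics:
  assumes K: "subfield_C K"
  shows "subfield_C {x. alg_over K x}"
proof -
  note KC = subfield_C_CR[OF K]
  have "{x. alg_over K x} = {x \<in> carrier CR. \<not> ring.transcendental CR K x}"
    using alg_over_algS[OF subfield_C_zero[OF K]] CR_alg_algS[OF KC] by (auto simp: over_def)
  thus ?thesis using CR_subfield_C[OF field.subfield_of_algebraics[OF field_CR KC]] by (simp add: over_def)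
qed


lemma subfield_C_UNIV: "subfield_C UNIV" by (simp add: subfield_C_def)

lemma gen_field_subfield: "subfield_C (gen_field S)"
  unfolding gen_field_def subfield_C_def by auto

lemma gen_field_incl: "S \<subseteq> gen_field S"
  unfolding gen_field_def by auto

lemma gen_field_least: "subfield_C F \<Longrightarrow> S \<subseteq> F \<Longrightarrow> gen_field S \<subseteq> F"
  unfolding gen_field_def by auto

lemma gen_field_mono: "S \<subseteq> S' \<Longrightarrow> gen_field S \<subseteq> gen_field S'"
  by (meson gen_field_incl gen_field_least gen_field_subfield order_trans)

context
  fixes F assumes F: "subfield_C F"
begin

lemma sf_0: "0 \<in> F" and sf_1: "1 \<in> F" using F by (auto simp: subfield_C_def)
lemma sf_add: "x \<in> F \<Longrightarrow> y \<in> F \<Longrightarrow> x + y \<in> F" using F by (auto simp: subfield_C_def)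
lemma sf_mult: "x \<in> F \<Longrightarrow> y \<in> F \<Longrightarrow> x * y \<in> F" using F by (auto simp: subfield_C_def)
lemma sf_uminus: "x \<in> F \<Longrightarrow> - x \<in> F" using F by (auto simp: subfield_C_def)
lemma sf_inverse: "x \<in> F \<Longrightarrow> inverse x \<in> F" using F by (auto simp: subfield_C_def)
lemma sf_diff: "x \<in> F \<Longrightarrow> y \<in> F \<Longrightarrow> x - y \<in> F"
  using sf_add[of x "-y"] sf_uminus[of y] by simp
lemma sf_divide: "x \<in> F \<Longrightarrow> y \<in> F \<Longrightarrow> x / y \<in> F"
  using sf_mult[of x "inverse y"] sf_inverse[of y] by (simp add: divide_inverse)
lemma sf_power: "x \<in> F \<Longrightarrow> x ^ n \<in> F"
  by (induction n) (auto intro: sf_1 sf_mult)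
lemma sf_sum: "(\<And>i. i \<in> I \<Longrightarrow> f i \<in> F) \<Longrightarrow> sum f I \<in> F"
  by (induction I rule: infinite_finite_induct) (auto intro: sf_0 sf_add)
lemma sf_prod: "(\<And>i. i \<in> I \<Longrightarrow> f i \<in> F) \<Longrightarrow> prod f I \<in> F"
  by (induction I rule: infinite_finite_induct) (auto intro: sf_1 sf_mult)
lemma sf_of_nat: "of_nat n \<in> F"
  by (induction n) (auto intro: sf_0 sf_1 sf_add)
lemma sf_of_int: "of_int k \<in> F"
proof (cases "k \<ge> 0")
  case True
  then show ?thesis using sf_of_nat[of "nat k"] by simp
next
  case False
  then show ?thesis using sf_uminus[OF sf_of_nat[of "nat (-k)"]] by simp
qed
lemma sf_of_rat: "of_rat q \<in> F"
proof -
  obtain a b where q: "q = Rat.Fract a b" "b > 0" by (cases q) auto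
  thus ?thesis using of_rat_rat[of b a, where 'a = complex] sf_divide[OF sf_of_int sf_of_int] by simp
qed

lemma alg_over_self: "x \<in> F \<Longrightarrow> alg_over F x"
  unfolding alg_over_def
  by (rule exI[of _ "[:-x, 1:]"]) (auto simp: coeff_pCons split: nat.splits intro: sf_uminus sf_1 sf_0)

end

lemma alg_over_mono: "F \<subseteq> G \<Longrightarrow> alg_over F x \<Longrightarrow> alg_over G x"
  unfolding alg_over_def by blast

section \<open>Algebraic closure operator\<close>

definition cl :: "complex set \<Rightarrow> complex set" where
  "cl T = {x. alg_over (gen_field T) x}"

lemma cl_subfield: "subfield_C (cl T)"
  unfolding cl_def by (rule subfield_C_algebraics[OF gen_field_subfield])

lemma gen_field_cl: "gen_field T \<subseteq> cl T"
  unfolding cl_def using alg_over_self[OF gen_field_subfield] by auto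

lemma T_cl: "T \<subseteq> cl T"
  using gen_field_cl gen_field_incl by blast

lemma cl_mono: "T \<subseteq> T' \<Longrightarrow> cl T \<subseteq> cl T'"
  unfolding cl_def using alg_over_mono gen_field_mono by blast

lemma cl_trans_field:
  assumes "subfield_C F" "F \<subseteq> cl T" "alg_over F x"
  shows "x \<in> cl T"
  unfolding cl_def
  using alg_over_trans[OF gen_field_subfield assms(1) _ assms(3)] assms(2) unfolding cl_def by blast

lemma cl_idem: "A \<subseteq> cl T \<Longrightarrow> cl A \<subseteq> cl T"
proof
  fix x assume A: "A \<subseteq> cl T" and x: "x \<in> cl A"
  have "gen_field A \<subseteq> cl T" using gen_field_least[OF cl_subfield A] .
  thus "x \<in> cl T" using cl_trans_field[OF gen_field_subfield] x unfolding cl_def by blast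
qed

section \<open>Clearing denominators\<close>

definition ringlike :: "complex set \<Rightarrow> bool" where
  "ringlike R \<longleftrightarrow> 0 \<in> R \<and> 1 \<in> R \<and> (\<forall>x\<in>R. \<forall>y\<in>R. x + y \<in> R \<and> x * y \<in> R) \<and> (\<forall>x\<in>R. - x \<in> R)"

definition fracs :: "complex set \<Rightarrow> complex set" where
  "fracs R = {u / v | u v. u \<in> R \<and> v \<in> R \<and> v \<noteq> 0}"

lemma fracsI: "u \<in> R \<Longrightarrow> v \<in> R \<Longrightarrow> v \<noteq> 0 \<Longrightarrow> u / v \<in> fracs R"
  unfolding fracs_def by blast

lemma fracsE: assumes "x \<in> fracs R"
  obtains u v where "x = u / v" "u \<in> R" "v \<in> R" "v \<noteq> 0"
  using assms unfolding fracs_def mem_Collect_eq by metis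

lemma fracs_incl: "ringlike R \<Longrightarrow> R \<subseteq> fracs R"
proof
  fix x assume "ringlike R" "x \<in> R"
  then show "x \<in> fracs R" using fracsI[of x R 1] unfolding ringlike_def by simp
qed

lemma fracs_subfield:
  assumes R: "ringlike R" shows "subfield_C (fracs R)"
proof -
  have R0: "0 \<in> R" and R1: "1 \<in> R" and Ra: "\<And>x y. x \<in> R \<Longrightarrow> y \<in> R \<Longrightarrow> x + y \<in> R"
    and Rm: "\<And>x y. x \<in> R \<Longrightarrow> y \<in> R \<Longrightarrow> x * y \<in> R" and Rn: "\<And>x. x \<in> R \<Longrightarrow> - x \<in> R"
    using R unfolding ringlike_def by auto
  have "0 \<in> fracs R" "1 \<in> fracs R" using fracs_incl[OF R] R0 R1 by auto
  moreover have "x + y \<in> fracs R \<and> x * y \<in> fracs R" if xy: "x \<in> fracs R" "y \<in> fracs R" for x y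
  proof -
    obtain u v where x: "x = u / v" "u \<in> R" "v \<in> R" "v \<noteq> 0" using xy(1) by (rule fracsE)
    obtain u' v' where y: "y = u' / v'" "u' \<in> R" "v' \<in> R" "v' \<noteq> 0" using xy(2) by (rule fracsE)
    have "x + y = (u * v' + u' * v) / (v * v')" using x y by (simp add: field_simps)
    moreover have "x * y = (u * u') / (v * v')" using x y by simp
    ultimately show ?thesis using x y Ra Rm fracsI by simp
  qed
  moreover have "- x \<in> fracs R \<and> inverse x \<in> fracs R" if xin: "x \<in> fracs R" for x
  proof -
    obtain u v where x: "x = u / v" "u \<in> R" "v \<in> R" "v \<noteq> 0" using xin by (rule fracsE)
    have "- x = (- u) / v" using x by simp
    hence "- x \<in> fracs R" using x Rn fracsI by metis
    moreover have "inverse x \<in> fracs R"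
    proof (cases "u = 0")
      case True
      then have "inverse x = 0 / 1" using x by simp
      then show ?thesis using R0 R1 fracsI by (metis zero_neq_one)
    next
      case False
      then have "inverse x = v / u" using x by simp
      then show ?thesis using x False fracsI by metis
    qed
    ultimately show ?thesis by simp
  qed
  ultimately show ?thesis unfolding subfield_C_def by blast
qed

lemma common_denom:
  fixes N :: nat
  assumes R: "ringlike R" and c: "\<forall>i<N. c i \<in> fracs R"
  shows "\<exists>v\<in>R. v \<noteq> 0 \<and> (\<forall>i<N. c i * v \<in> R)"
  using c
proof (induction N)
  case 0
  then show ?case using R unfolding ringlike_def by (intro bexI[of _ 1]) auto
next
  case (Suc N)
  then obtain v where v: "v \<in> R" "v \<noteq> 0" "\<forall>i<N. c i * v \<in> R" by auto
  obtain u w where uw: "c N = u / w" "u \<in> R" "w \<in> R" "w \<noteq> 0"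
    using Suc.prems by (meson fracsE lessI)
  have Rm: "\<And>x y. x \<in> R \<Longrightarrow> y \<in> R \<Longrightarrow> x * y \<in> R" using R unfolding ringlike_def by auto
  have "\<forall>i<Suc N. c i * (v * w) \<in> R"
  proof (intro allI impI)
    fix i assume "i < Suc N"
    then consider "i < N" | "i = N" by linarith
    then show "c i * (v * w) \<in> R"
    proof cases
      case 1
      then have "c i * (v * w) = (c i * v) * w" by simp
      then show ?thesis using Rm v(3) 1 uw(3) by metis
    next
      case 2
      then have "c i * (v * w) = u * v" using uw by simp
      then show ?thesis using Rm uw(2) v(1) by metis
    qed
  qed
  then show ?case using v uw Rm by (intro bexI[of _ "v * w"]) auto
qed

lemma algS_clear:
  assumes R: "ringlike R" and a: "algS (fracs R) x"
  shows "algS R x"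
proof -
  obtain N c where c: "\<forall>i<N. c i \<in> fracs R" "\<exists>i<N. c i \<noteq> 0" "(\<Sum>i<N. c i * x^i) = 0"
    using a unfolding algS_def by auto
  obtain v where v: "v \<in> R" "v \<noteq> 0" "\<forall>i<N. c i * v \<in> R" using common_denom[OF R c(1)] by auto
  have "(\<Sum>i<N. (c i * v) * x^i) = v * (\<Sum>i<N. c i * x^i)"
    by (simp add: sum_distrib_left mult_ac)
  also have "\<dots> = 0" using c(3) by simp
  finally show ?thesis unfolding algS_def using v c(2)
    by (intro exI[of _ N] exI[of _ "\<lambda>i. c i * v"]) auto
qed


section \<open>Exchange\<close>

lemma algSI: "(\<forall>i<N. c i \<in> K) \<Longrightarrow> (\<exists>i<N. c i \<noteq> 0) \<Longrightarrow> (\<Sum>i<N. c i * x^i) = 0 \<Longrightarrow> algS K x"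
  unfolding algS_def by blast


lemma KyI: "\<forall>i. Polynomial.coeff p i \<in> K \<Longrightarrow> poly p y \<in> {poly p y | p. \<forall>i. Polynomial.coeff p i \<in> K}"
  by blast

lemma ringlike_Ky:
  assumes K: "subfield_C K"
  shows "ringlike {poly p y | p. \<forall>i. Polynomial.coeff p i \<in> K}"
proof -
  let ?R = "{poly p y | p. \<forall>i. Polynomial.coeff p i \<in> K}"
  have "0 \<in> ?R" using sf_0[OF K] by (intro CollectI exI[of _ 0]) auto
  moreover have "1 \<in> ?R" using sf_0[OF K] sf_1[OF K]
    by (intro CollectI exI[of _ 1]) (auto simp: coeff_1)
  moreover have "a + b \<in> ?R \<and> a * b \<in> ?R" if ab: "a \<in> ?R" "b \<in> ?R" for a b
  proof -
    obtain p where p: "a = poly p y" "\<forall>i. Polynomial.coeff p i \<in> K" using ab(1) by blast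
    obtain q where q: "b = poly q y" "\<forall>i. Polynomial.coeff q i \<in> K" using ab(2) by blast
    have "\<forall>i. Polynomial.coeff (p + q) i \<in> K" using p q sf_add[OF K] by simp
    moreover have "\<forall>i. Polynomial.coeff (p * q) i \<in> K"
      using p q by (auto simp: coeff_mult intro!: sf_sum[OF K] sf_mult[OF K])
    ultimately show ?thesis using p q KyI[of "p+q" K y] KyI[of "p*q" K y] by simp
  qed
  moreover have "- a \<in> ?R" if a: "a \<in> ?R" for a
  proof -
    obtain p where p: "a = poly p y" "\<forall>i. Polynomial.coeff p i \<in> K" using a by blast
    have "\<forall>i. Polynomial.coeff (- p) i \<in> K" using p sf_uminus[OF K] by simp
    thus ?thesis using p KyI[of "-p" K y] by simp
  qed
  ultimately show ?thesis unfolding ringlike_def by blast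
qed

lemma exchange:
  assumes x: "x \<in> cl (insert y A)" and nx: "x \<notin> cl A"
  shows "y \<in> cl (insert x A)"
proof -
  define K where "K = gen_field A"
  have K: "subfield_C K" unfolding K_def by (rule gen_field_subfield)
  define Ky where "Ky = {poly p y | p. \<forall>i. Polynomial.coeff p i \<in> K}"
  have Ky: "ringlike Ky" unfolding Ky_def by (rule ringlike_Ky[OF K])
  have KKy: "K \<subseteq> Ky"
  proof
    fix k assume "k \<in> K"
    then show "k \<in> Ky" unfolding Ky_def using sf_0[OF K]
      by (intro CollectI exI[of _ "[:k:]"]) (auto simp: coeff_pCons split: nat.splits)
  qed
  have yKy: "y \<in> Ky" unfolding Ky_def using sf_0[OF K] sf_1[OF K]
    by (intro CollectI exI[of _ "[:0, 1:]"]) (auto simp: coeff_pCons split: nat.splits)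
  have "insert y A \<subseteq> fracs Ky"
    using fracs_incl[OF Ky] KKy yKy gen_field_incl[of A] unfolding K_def by blast
  hence "gen_field (insert y A) \<subseteq> fracs Ky"
    by (rule gen_field_least[OF fracs_subfield[OF Ky]])
  hence "alg_over (fracs Ky) x" using x alg_over_mono unfolding cl_def by blast
  hence "algS (fracs Ky) x" using alg_over_algS sf_0[OF fracs_subfield[OF Ky]] by blast
  hence "algS Ky x" by (rule algS_clear[OF Ky])
  then obtain N c where c: "\<forall>i<N. c i \<in> Ky" "\<exists>i<N. c i \<noteq> 0" "(\<Sum>i<N. c i * x^i) = 0"
    unfolding algS_def by auto
  have "\<forall>i. \<exists>r. i < N \<longrightarrow> c i = poly r y \<and> (\<forall>j. Polynomial.coeff r j \<in> K)"
    using c(1) unfolding Ky_def by blast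
  then obtain r where r: "\<And>i. i < N \<Longrightarrow> c i = poly (r i) y \<and> (\<forall>j. Polynomial.coeff (r i) j \<in> K)"
    by metis
  define M where "M = Suc (\<Sum>i<N. Polynomial.degree (r i))"
  have degM: "Polynomial.degree (r i) < M" if "i < N" for i
  proof -
    have "Polynomial.degree (r i) \<le> (\<Sum>i<N. Polynomial.degree (r i))"
      using that by (intro member_le_sum) auto
    thus ?thesis unfolding M_def by simp
  qed
  define s where "s j = (\<Sum>i<N. Polynomial.coeff (r i) j * x^i)" for j
  have key: "(\<Sum>j<M. s j * y^j) = (\<Sum>i<N. c i * x^i)"
  proof -
    have "(\<Sum>j<M. s j * y^j) = (\<Sum>j<M. \<Sum>i<N. Polynomial.coeff (r i) j * y^j * x^i)"
      unfolding s_def by (simp add: sum_distrib_left sum_distrib_right mult_ac)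
    also have "\<dots> = (\<Sum>i<N. \<Sum>j<M. Polynomial.coeff (r i) j * y^j * x^i)"
      by (rule sum.swap)
    also have "\<dots> = (\<Sum>i<N. c i * x^i)"
    proof (rule sum.cong[OF refl])
      fix i assume "i \<in> {..<N}"
      hence i: "i < N" by simp
      have "(\<Sum>j<M. Polynomial.coeff (r i) j * y^j * x^i) = (\<Sum>j<M. Polynomial.coeff (r i) j * y^j) * x^i"
        by (simp add: sum_distrib_right)
      also have "\<dots> = poly (r i) y * x^i" using poly_sum_bound[OF degM[OF i], of y] by simp
      finally show "(\<Sum>j<M. Polynomial.coeff (r i) j * y^j * x^i) = c i * x^i" using r[OF i] by simp
    qed
    finally show ?thesis .
  qed
  have "\<exists>j<M. s j \<noteq> 0"
  proof (rule ccontr)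
    assume "\<not> (\<exists>j<M. s j \<noteq> 0)"
    hence s0: "\<And>j. j < M \<Longrightarrow> s j = 0" by auto
    have nalg: "\<not> algS K x" using nx alg_over_algS[OF sf_0[OF K]] unfolding cl_def K_def by blast
    have coeff0: "Polynomial.coeff (r i) j = 0" if "i < N" for i j
    proof (cases "j < M")
      case True
      have "\<not> (\<exists>i<N. Polynomial.coeff (r i) j \<noteq> 0)"
      proof
        assume H: "\<exists>i<N. Polynomial.coeff (r i) j \<noteq> 0"
        have H1: "\<forall>i<N. Polynomial.coeff (r i) j \<in> K" using r by blast
        have H2: "(\<Sum>i<N. Polynomial.coeff (r i) j * x^i) = 0" using s0[OF True] unfolding s_def .
        have "algS K x" by (rule algSI[OF H1 H H2])
        thus False using nalg by blast
      qed
      thus ?thesis using that by blast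
    next
      case False
      then show ?thesis using degM[OF that] by (intro coeff_eq_0) linarith
    qed
    have "c i = 0" if "i < N" for i
    proof -
      have "r i = 0" using coeff0[OF that] by (intro poly_eqI) simp
      thus ?thesis using r[OF that] by simp
    qed
    thus False using c(2) by blast
  qed
  moreover have "\<forall>j<M. s j \<in> gen_field (insert x A)"
  proof (intro allI impI)
    fix j assume "j < M"
    have "K \<subseteq> gen_field (insert x A)" unfolding K_def by (rule gen_field_mono) auto
    moreover have "x \<in> gen_field (insert x A)" using gen_field_incl by blast
    ultimately show "s j \<in> gen_field (insert x A)" unfolding s_def using r
      by (intro sf_sum[OF gen_field_subfield] sf_mult[OF gen_field_subfield]
          sf_power[OF gen_field_subfield]) blast+
  qed
  moreover have "(\<Sum>j<M. s j * y^j) = 0" using key c(3) by simp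
  ultimately have "algS (gen_field (insert x A)) y" using algSI[of M s] by blast
  thus ?thesis unfolding cl_def using alg_over_algS[OF sf_0[OF gen_field_subfield]] by blast
qed

section \<open>Steinitz\<close>

lemma steinitz:
  "finite T \<Longrightarrow> (\<forall>j<length s. s!j \<in> cl (B \<union> T) \<and> s!j \<notin> cl (B \<union> set (take j s)))
   \<Longrightarrow> length s \<le> card T"
proof (induction s arbitrary: B T)
  case Nil
  then show ?case by simp
next
  case (Cons a s)
  have a: "a \<in> cl (B \<union> T)" "a \<notin> cl B" using Cons.prems(2) by (auto dest: spec[of _ 0])
  define P where "P U = (U \<subseteq> T \<and> a \<in> cl (B \<union> U))" for U
  have "P T" using a unfolding P_def by auto
  then obtain U where U: "P U" "\<And>U'. P U' \<Longrightarrow> card U \<le> card U'"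
    using ex_has_least_nat[of P T card] by blast
  have UT: "U \<subseteq> T" and aU: "a \<in> cl (B \<union> U)" using U(1) unfolding P_def by auto
  have finU: "finite U" using UT Cons.prems(1) finite_subset by blast
  have "U \<noteq> {}" using aU a(2) by auto
  then obtain t where t: "t \<in> U" by blast
  have "\<not> P (U - {t})"
  proof
    assume "P (U - {t})"
    hence "card U \<le> card (U - {t})" using U(2) by blast
    moreover have "card (U - {t}) < card U" using finU t by (meson card_Diff1_less)
    ultimately show False by simp
  qed
  hence na: "a \<notin> cl (B \<union> (U - {t}))" using UT unfolding P_def by blast
  have "B \<union> U = insert t (B \<union> (U - {t}))" using t by blast
  hence "a \<in> cl (insert t (B \<union> (U - {t})))" using aU by simp
  hence "t \<in> cl (insert a (B \<union> (U - {t})))" using exchange na by blast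
  define B' where "B' = insert a B"
  define T' where "T' = T - {t}"
  have "insert a (B \<union> (U - {t})) \<subseteq> B' \<union> T'" unfolding B'_def T'_def using UT by blast
  hence tcl: "t \<in> cl (B' \<union> T')" using \<open>t \<in> cl _\<close> cl_mono by blast
  have "B \<union> T \<subseteq> cl (B' \<union> T')"
  proof
    fix z assume "z \<in> B \<union> T"
    then consider "z = t" | "z \<in> B' \<union> T'" unfolding B'_def T'_def by blast
    then show "z \<in> cl (B' \<union> T')" using tcl T_cl by cases blast+
  qed
  hence clsub: "cl (B \<union> T) \<subseteq> cl (B' \<union> T')" by (rule cl_idem)
  have "\<forall>j<length s. s!j \<in> cl (B' \<union> T') \<and> s!j \<notin> cl (B' \<union> set (take j s))"
  proof (intro allI impI)
    fix j assume j: "j < length s"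
    have h: "(a#s)!(Suc j) \<in> cl (B \<union> T) \<and> (a#s)!(Suc j) \<notin> cl (B \<union> set (take (Suc j) (a#s)))"
      using Cons.prems(2) j by auto
    have "B \<union> set (take (Suc j) (a#s)) = B' \<union> set (take j s)" unfolding B'_def by auto
    then show "s!j \<in> cl (B' \<union> T') \<and> s!j \<notin> cl (B' \<union> set (take j s))"
      using h clsub by auto
  qed
  hence "length s \<le> card T'" using Cons.IH[of T' B'] Cons.prems(1) unfolding T'_def by blast
  moreover have "card T' = card T - 1" unfolding T'_def using t UT Cons.prems(1) by (simp add: card_Diff_singleton subsetD)
  moreover have "card T \<ge> 1" using t UT Cons.prems(1) by (metis One_nat_def Suc_leI card_gt_0_iff empty_iff subsetD)
  ultimately show ?case by simp
qed


type_synonym mp = "(nat \<Rightarrow>\<^sub>0 nat) \<Rightarrow>\<^sub>0 rat"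

definition mon :: "(nat \<Rightarrow>\<^sub>0 nat) \<Rightarrow> (nat \<Rightarrow> complex) \<Rightarrow> complex" where
  "mon \<mu> x = (\<Prod>i\<in>Poly_Mapping.keys \<mu>. x i ^ Poly_Mapping.lookup \<mu> i)"

lemma eval_mon: "mpoly_eval p x = (\<Sum>\<mu>\<in>Poly_Mapping.keys p. of_rat (Poly_Mapping.lookup p \<mu>) * mon \<mu> x)"
  unfolding mpoly_eval_def mon_def ..

lemma mon_superset:
  assumes "finite A" "Poly_Mapping.keys \<mu> \<subseteq> A"
  shows "mon \<mu> x = (\<Prod>i\<in>A. x i ^ Poly_Mapping.lookup \<mu> i)"
  unfolding mon_def
  by (rule prod.mono_neutral_left[OF assms(1,2)]) (auto simp: in_keys_iff)

lemma keys_add_nat: "Poly_Mapping.keys ((\<mu>::nat \<Rightarrow>\<^sub>0 nat) + \<nu>) = Poly_Mapping.keys \<mu> \<union> Poly_Mapping.keys \<nu>"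
  by (auto simp: in_keys_iff lookup_add)

lemma mon_add: "mon (\<mu> + \<nu>) x = mon \<mu> x * mon \<nu> x"
proof -
  let ?A = "Poly_Mapping.keys \<mu> \<union> Poly_Mapping.keys \<nu>"
  have "mon (\<mu> + \<nu>) x = (\<Prod>i\<in>?A. x i ^ Poly_Mapping.lookup (\<mu> + \<nu>) i)"
    by (rule mon_superset) (auto simp: keys_add_nat)
  also have "\<dots> = (\<Prod>i\<in>?A. x i ^ Poly_Mapping.lookup \<mu> i) * (\<Prod>i\<in>?A. x i ^ Poly_Mapping.lookup \<nu> i)"
    by (simp add: lookup_add power_add prod.distrib)
  also have "\<dots> = mon \<mu> x * mon \<nu> x"
    by (subst (1 2) mon_superset[where A = ?A]) auto
  finally show ?thesis .
qed

lemma mon_zero[simp]: "mon 0 x = 1" by (simp add: mon_def)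

lemma mon_single[simp]: "mon (Poly_Mapping.single i n) x = x i ^ n"
  by (cases "n = 0") (auto simp: mon_def)

lemma eval_superset:
  assumes "finite A" "Poly_Mapping.keys p \<subseteq> A"
  shows "mpoly_eval p x = (\<Sum>\<mu>\<in>A. of_rat (Poly_Mapping.lookup p \<mu>) * mon \<mu> x)"
  unfolding eval_mon
  by (rule sum.mono_neutral_left[OF assms(1,2)]) (auto simp: in_keys_iff)

lemma eval_zero[simp]: "mpoly_eval 0 x = 0" by (simp add: mpoly_eval_def)

lemma eval_add: "mpoly_eval (p + q) x = mpoly_eval p x + mpoly_eval q x"
proof -
  let ?A = "Poly_Mapping.keys p \<union> Poly_Mapping.keys q"
  have "mpoly_eval (p + q) x = (\<Sum>\<mu>\<in>?A. of_rat (Poly_Mapping.lookup (p + q) \<mu>) * mon \<mu> x)"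
    by (rule eval_superset) (use keys_add[of p q] in auto)
  also have "\<dots> = (\<Sum>\<mu>\<in>?A. of_rat (Poly_Mapping.lookup p \<mu>) * mon \<mu> x) + (\<Sum>\<mu>\<in>?A. of_rat (Poly_Mapping.lookup q \<mu>) * mon \<mu> x)"
    by (simp add: lookup_add of_rat_add distrib_right sum.distrib)
  also have "\<dots> = mpoly_eval p x + mpoly_eval q x"
    by (subst (1 2) eval_superset[where A = ?A]) auto
  finally show ?thesis .
qed

lemma eval_uminus: "mpoly_eval (- p) x = - mpoly_eval p x"
  by (simp add: eval_mon of_rat_minus sum_negf)

lemma eval_sum: "mpoly_eval (\<Sum>i\<in>I. f i) x = (\<Sum>i\<in>I. mpoly_eval (f i) x)"
  by (induction I rule: infinite_finite_induct) (auto simp: eval_add)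

lemma eval_single: "mpoly_eval (Poly_Mapping.single \<mu> c) x = of_rat c * mon \<mu> x"
  by (simp add: eval_mon)

lemma p_expand: "p = (\<Sum>\<mu>\<in>Poly_Mapping.keys p. Poly_Mapping.single \<mu> (Poly_Mapping.lookup p \<mu>))"
proof (rule poly_mapping_eqI)
  fix \<nu>
  have "Poly_Mapping.lookup (\<Sum>\<mu>\<in>Poly_Mapping.keys p. Poly_Mapping.single \<mu> (Poly_Mapping.lookup p \<mu>)) \<nu>
      = (\<Sum>\<mu>\<in>Poly_Mapping.keys p. (Poly_Mapping.lookup p \<mu> when \<mu> = \<nu>))"
    by (simp add: lookup_sum lookup_single)
  also have "\<dots> = (\<Sum>\<mu>\<in>Poly_Mapping.keys p. (if \<mu> = \<nu> then Poly_Mapping.lookup p \<nu> else 0))"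
    by (rule sum.cong) (auto simp: when_def)
  also have "\<dots> = Poly_Mapping.lookup p \<nu>"
    by (simp add: in_keys_iff)
  finally show "Poly_Mapping.lookup p \<nu> = Poly_Mapping.lookup (\<Sum>\<mu>\<in>Poly_Mapping.keys p. Poly_Mapping.single \<mu> (Poly_Mapping.lookup p \<mu>)) \<nu>"
    by simp
qed

lemma eval_single_mult:
  "mpoly_eval (Poly_Mapping.single \<mu> c * q) x = of_rat c * mon \<mu> x * mpoly_eval q x"
proof -
  have "Poly_Mapping.single \<mu> c * q = (\<Sum>\<nu>\<in>Poly_Mapping.keys q. Poly_Mapping.single \<mu> c * Poly_Mapping.single \<nu> (Poly_Mapping.lookup q \<nu>))"
    by (subst p_expand[of q]) (simp add: sum_distrib_left)
  also have "\<dots> = (\<Sum>\<nu>\<in>Poly_Mapping.keys q. Poly_Mapping.single (\<mu> + \<nu>) (c * Poly_Mapping.lookup q \<nu>))"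
    by (simp add: mult_single)
  finally have "mpoly_eval (Poly_Mapping.single \<mu> c * q) x
     = (\<Sum>\<nu>\<in>Poly_Mapping.keys q. of_rat (c * Poly_Mapping.lookup q \<nu>) * mon (\<mu> + \<nu>) x)"
    by (simp add: eval_sum eval_single)
  also have "\<dots> = of_rat c * mon \<mu> x * (\<Sum>\<nu>\<in>Poly_Mapping.keys q. of_rat (Poly_Mapping.lookup q \<nu>) * mon \<nu> x)"
    by (simp add: of_rat_mult mon_add sum_distrib_left mult_ac)
  finally show ?thesis by (simp add: eval_mon)
qed

lemma eval_mult: "mpoly_eval (p * q) x = mpoly_eval p x * mpoly_eval q x"
proof -
  have "mpoly_eval (p * q) x = (\<Sum>\<mu>\<in>Poly_Mapping.keys p. mpoly_eval (Poly_Mapping.single \<mu> (Poly_Mapping.lookup p \<mu>) * q) x)"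
    by (subst p_expand[of p]) (simp add: sum_distrib_right eval_sum)
  also have "\<dots> = (\<Sum>\<mu>\<in>Poly_Mapping.keys p. of_rat (Poly_Mapping.lookup p \<mu>) * mon \<mu> x) * mpoly_eval q x"
    by (simp add: eval_single_mult sum_distrib_right)
  finally show ?thesis by (simp add: eval_mon)
qed

lemma eval_one[simp]: "mpoly_eval 1 x = 1"
  by (simp add: eval_mon lookup_one)

definition varsin :: "mp \<Rightarrow> nat set \<Rightarrow> bool" where
  "varsin p I \<longleftrightarrow> (\<forall>mon\<in>Poly_Mapping.keys p. Poly_Mapping.keys mon \<subseteq> I)"

lemma alg_indep_Q_def': "alg_indep_Q I x \<longleftrightarrow> (\<forall>p. varsin p I \<longrightarrow> mpoly_eval p x = 0 \<longrightarrow> p = 0)"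
  unfolding alg_indep_Q_def varsin_def ..

lemma varsin_add: "varsin p I \<Longrightarrow> varsin q I \<Longrightarrow> varsin (p + q) I"
proof -
  assume a: "varsin p I" "varsin q I"
  have "Poly_Mapping.keys (p + q) \<subseteq> Poly_Mapping.keys p \<union> Poly_Mapping.keys q" by (rule keys_add)
  with a show ?thesis unfolding varsin_def by blast
qed

lemma varsin_mult: "varsin p I \<Longrightarrow> varsin q I \<Longrightarrow> varsin (p * q) I"
proof -
  assume a: "varsin p I" "varsin q I"
  have k: "Poly_Mapping.keys (p * q) \<subseteq> {a + b | a b. a \<in> Poly_Mapping.keys p \<and> b \<in> Poly_Mapping.keys q}"
    by (rule keys_mult)
  show ?thesis unfolding varsin_def
  proof
    fix m assume "m \<in> Poly_Mapping.keys (p * q)"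
    then obtain u v where "m = u + v" "u \<in> Poly_Mapping.keys p" "v \<in> Poly_Mapping.keys q" using k by blast
    then show "Poly_Mapping.keys m \<subseteq> I" using a unfolding varsin_def by (simp add: keys_add_nat)
  qed
qed

lemma varsin_uminus: "varsin p I \<Longrightarrow> varsin (- p) I"
  unfolding varsin_def by simp

lemma varsin_single: "Poly_Mapping.keys \<mu> \<subseteq> I \<Longrightarrow> varsin (Poly_Mapping.single \<mu> c) I"
  unfolding varsin_def by simp

lemma varsin_zero: "varsin 0 I" unfolding varsin_def by simp
lemma varsin_one: "varsin 1 I" unfolding varsin_def by simp

lemma varsin_sum: "(\<And>i. i \<in> A \<Longrightarrow> varsin (f i) I) \<Longrightarrow> varsin (\<Sum>i\<in>A. f i) I"
  by (induction A rule: infinite_finite_induct) (auto intro: varsin_add varsin_zero)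

lemma varsin_mono: "varsin p I \<Longrightarrow> I \<subseteq> J \<Longrightarrow> varsin p J"
  unfolding varsin_def by blast

definition Rng :: "(nat \<Rightarrow> complex) \<Rightarrow> nat set \<Rightarrow> complex set" where
  "Rng x I = {mpoly_eval p x | p. varsin p I}"

lemma RngI: "varsin p I \<Longrightarrow> mpoly_eval p x \<in> Rng x I"
  unfolding Rng_def by blast

lemma ringlike_Rng: "ringlike (Rng x I)"
proof -
  have "0 \<in> Rng x I" using RngI[OF varsin_zero[of I], of x] by simp
  moreover have "1 \<in> Rng x I" using RngI[OF varsin_one[of I], of x] by simp
  moreover have "a + b \<in> Rng x I \<and> a * b \<in> Rng x I" if ab: "a \<in> Rng x I" "b \<in> Rng x I" for a b
  proof -
    obtain p where p: "a = mpoly_eval p x" "varsin p I" using ab(1) unfolding Rng_def by blast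
    obtain q where q: "b = mpoly_eval q x" "varsin q I" using ab(2) unfolding Rng_def by blast
    show ?thesis using RngI[OF varsin_add[OF p(2) q(2)], of x] RngI[OF varsin_mult[OF p(2) q(2)], of x]
      p(1) q(1) by (simp add: eval_add eval_mult)
  qed
  moreover have "- a \<in> Rng x I" if a: "a \<in> Rng x I" for a
  proof -
    obtain p where p: "a = mpoly_eval p x" "varsin p I" using a unfolding Rng_def by blast
    show ?thesis using RngI[OF varsin_uminus[OF p(2)], of x] p(1) by (simp add: eval_uminus)
  qed
  ultimately show ?thesis unfolding ringlike_def by blast
qed

abbreviation Xv :: "nat \<Rightarrow> nat \<Rightarrow> mp" where
  "Xv k i \<equiv> Poly_Mapping.single (Poly_Mapping.single k i) 1"

lemma eval_Xv[simp]: "mpoly_eval (Xv k i) x = x k ^ i"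
  by (simp add: eval_single)

lemma varsin_Xv: "k \<in> I \<Longrightarrow> varsin (Xv k i) I"
  by (rule varsin_single) simp

lemma x_in_Rng: "i \<in> I \<Longrightarrow> x i \<in> Rng x I"
  using RngI[OF varsin_Xv[of i I 1], of x] by simp

lemma Rng_gen_field: "Rng x I \<subseteq> gen_field (x ` I)"
proof
  fix a assume "a \<in> Rng x I"
  then obtain p where p: "a = mpoly_eval p x" "varsin p I" unfolding Rng_def by blast
  note F = gen_field_subfield[of "x ` I"]
  have "x i \<in> gen_field (x ` I)" if "i \<in> I" for i using gen_field_incl that by blast
  then show "a \<in> gen_field (x ` I)" unfolding p(1) mpoly_eval_def using p(2) unfolding varsin_def
    by (intro sf_sum[OF F] sf_mult[OF F] sf_of_rat[OF F] sf_prod[OF F] sf_power[OF F]) blast+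
qed


lemma mult_single_expand:
  "(p::mp) * Poly_Mapping.single \<nu> c = (\<Sum>\<mu>\<in>Poly_Mapping.keys p. Poly_Mapping.single (\<mu> + \<nu>) (Poly_Mapping.lookup p \<mu> * c))"
  by (subst p_expand[of p]) (simp add: sum_distrib_right mult_single)

lemma lookup_mult_Xv:
  "Poly_Mapping.lookup ((p::mp) * Poly_Mapping.single \<nu> 1) l =
     (\<Sum>\<mu>\<in>Poly_Mapping.keys p. if \<mu> + \<nu> = l then Poly_Mapping.lookup p \<mu> else 0)"
  by (subst mult_single_expand) (simp add: lookup_sum lookup_single when_def)

lemma lookup_mult_single_shift:
  "Poly_Mapping.lookup ((p::mp) * Poly_Mapping.single \<nu> 1) (\<rho> + \<nu>) = Poly_Mapping.lookup p \<rho>"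
proof -
  have "Poly_Mapping.lookup (p * Poly_Mapping.single \<nu> 1) (\<rho> + \<nu>) =
     (\<Sum>\<mu>\<in>Poly_Mapping.keys p. if \<mu> = \<rho> then Poly_Mapping.lookup p \<mu> else 0)"
    unfolding lookup_mult_Xv by (rule sum.cong) auto
  also have "\<dots> = Poly_Mapping.lookup p \<rho>" by (simp add: in_keys_iff)
  finally show ?thesis .
qed

lemma lookup_mult_single_none:
  "(\<forall>\<rho>. l \<noteq> \<rho> + \<nu>) \<Longrightarrow> Poly_Mapping.lookup ((p::mp) * Poly_Mapping.single \<nu> 1) l = 0"
  unfolding lookup_mult_Xv by (rule sum.neutral) auto

lemma LK:
  assumes vp: "\<forall>i<N. varsin (p i) I" and k: "k \<notin> I" and mu: "Poly_Mapping.lookup \<mu> k = 0"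
  shows "Poly_Mapping.lookup (\<Sum>i<N. p i * Xv k i) (\<mu> + Poly_Mapping.single k j)
       = (if j < N then Poly_Mapping.lookup (p j) \<mu> else 0)"
proof -
  have trm: "Poly_Mapping.lookup (p i * Xv k i) (\<mu> + Poly_Mapping.single k j)
      = (if i = j then Poly_Mapping.lookup (p j) \<mu> else 0)" if i: "i < N" for i
  proof (cases "i = j")
    case True
    then show ?thesis by (simp add: lookup_mult_single_shift)
  next
    case False
    show ?thesis
    proof (cases "\<exists>\<rho>. \<mu> + Poly_Mapping.single k j = \<rho> + Poly_Mapping.single k i")
      case True
      then obtain \<rho> where rho: "\<mu> + Poly_Mapping.single k j = \<rho> + Poly_Mapping.single k i" by blast
      have "Poly_Mapping.lookup (p i) \<rho> = 0"
      proof (rule ccontr)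
        assume "Poly_Mapping.lookup (p i) \<rho> \<noteq> 0"
        hence "\<rho> \<in> Poly_Mapping.keys (p i)" by (simp add: in_keys_iff)
        hence "Poly_Mapping.keys \<rho> \<subseteq> I" using vp i unfolding varsin_def by blast
        hence "Poly_Mapping.lookup \<rho> k = 0" using k by (auto simp: in_keys_iff)
        moreover have "Poly_Mapping.lookup (\<mu> + Poly_Mapping.single k j) k = Poly_Mapping.lookup (\<rho> + Poly_Mapping.single k i) k"
          using rho by simp
        ultimately have "j = i" using mu by (simp add: lookup_add)
        thus False using False by simp
      qed
      then show ?thesis using False rho lookup_mult_single_shift[of "p i" "Poly_Mapping.single k i" \<rho>] by simp
    next
      case False
      then show ?thesis using \<open>i \<noteq> j\<close> lookup_mult_single_none by auto
    qed
  qed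
  have "Poly_Mapping.lookup (\<Sum>i<N. p i * Xv k i) (\<mu> + Poly_Mapping.single k j)
      = (\<Sum>i<N. Poly_Mapping.lookup (p i * Xv k i) (\<mu> + Poly_Mapping.single k j))"
    by (simp add: lookup_sum)
  also have "\<dots> = (\<Sum>i<N. if i = j then Poly_Mapping.lookup (p j) \<mu> else 0)"
    by (rule sum.cong) (auto simp: trm)
  also have "\<dots> = (if j < N then Poly_Mapping.lookup (p j) \<mu> else 0)"
    by (simp add: sum.delta)
  finally show ?thesis .
qed

lemma compose_zero:
  assumes vp: "\<forall>i<N. varsin (p i) I" and k: "k \<notin> I" and P0: "(\<Sum>i<N. p i * Xv k i) = 0"
  shows "\<forall>i<N. p i = 0"
proof (intro allI impI)
  fix i assume i: "i < N"
  show "p i = 0"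
  proof (rule poly_mapping_eqI)
    fix \<mu>
    show "Poly_Mapping.lookup (p i) \<mu> = Poly_Mapping.lookup 0 \<mu>"
    proof (cases "\<mu> \<in> Poly_Mapping.keys (p i)")
      case True
      hence "Poly_Mapping.keys \<mu> \<subseteq> I" using vp i unfolding varsin_def by blast
      hence "Poly_Mapping.lookup \<mu> k = 0" using k by (auto simp: in_keys_iff)
      from LK[OF vp k this, of i] i P0 show ?thesis by simp
    next
      case False
      then show ?thesis by (simp add: in_keys_iff)
    qed
  qed
qed

lemma compose_varsin:
  "\<forall>i<N. varsin (p i) I \<Longrightarrow> varsin (\<Sum>i<N. p i * Xv k i) (insert k I)"
  by (intro varsin_sum varsin_mult) (auto intro: varsin_mono varsin_Xv)

lemma compose_eval:
  "mpoly_eval (\<Sum>i<N. p i * Xv k i) x = (\<Sum>i<N. mpoly_eval (p i) x * x k ^ i)"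
  by (simp add: eval_sum eval_mult)

definition dcp :: "mp \<Rightarrow> nat \<Rightarrow> nat \<Rightarrow> mp" where
  "dcp P k i = Abs_poly_mapping (\<lambda> \<mu>. if Poly_Mapping.lookup \<mu> k = 0 then Poly_Mapping.lookup P (\<mu> + Poly_Mapping.single k i) else 0)"

lemma lookup_dcp:
  "Poly_Mapping.lookup (dcp P k i) \<mu> = (if Poly_Mapping.lookup \<mu> k = 0 then Poly_Mapping.lookup P (\<mu> + Poly_Mapping.single k i) else 0)"
proof -
  let ?f = "\<lambda> \<mu>. if Poly_Mapping.lookup \<mu> k = 0 then Poly_Mapping.lookup P (\<mu> + Poly_Mapping.single k i) else 0"
  have "{\<mu>. ?f \<mu> \<noteq> 0} \<subseteq> (\<lambda> l. l - Poly_Mapping.single k i) ` Poly_Mapping.keys P"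
  proof
    fix \<mu> assume "\<mu> \<in> {\<mu>. ?f \<mu> \<noteq> 0}"
    hence "\<mu> + Poly_Mapping.single k i \<in> Poly_Mapping.keys P" by (auto simp: in_keys_iff split: if_splits)
    moreover have "\<mu> = (\<mu> + Poly_Mapping.single k i) - Poly_Mapping.single k i" by simp
    ultimately show "\<mu> \<in> (\<lambda> l. l - Poly_Mapping.single k i) ` Poly_Mapping.keys P" by blast
  qed
  hence "finite {\<mu>. ?f \<mu> \<noteq> 0}" by (rule finite_subset) simp
  thus ?thesis unfolding dcp_def by simp
qed

lemma keys_le_add: "Poly_Mapping.keys (\<mu>::nat \<Rightarrow>\<^sub>0 nat) \<subseteq> Poly_Mapping.keys (\<mu> + \<nu>)"
  by (simp add: keys_add_nat)

lemma dcp_varsin: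
  assumes "varsin P (insert k I)" "k \<notin> I"
  shows "varsin (dcp P k i) I"
  unfolding varsin_def
proof
  fix \<mu> assume "\<mu> \<in> Poly_Mapping.keys (dcp P k i)"
  hence h: "Poly_Mapping.lookup \<mu> k = 0" "\<mu> + Poly_Mapping.single k i \<in> Poly_Mapping.keys P"
    by (auto simp: in_keys_iff lookup_dcp split: if_splits)
  have "Poly_Mapping.keys \<mu> \<subseteq> insert k I"
    using h(2) assms(1) keys_le_add[of \<mu> "Poly_Mapping.single k i"] unfolding varsin_def by blast
  moreover have "k \<notin> Poly_Mapping.keys \<mu>" using h(1) by (simp add: in_keys_iff)
  ultimately show "Poly_Mapping.keys \<mu> \<subseteq> I" by blast
qed

lemma split_k:
  "(l::nat \<Rightarrow>\<^sub>0 nat) = (l - Poly_Mapping.single k (Poly_Mapping.lookup l k)) + Poly_Mapping.single k (Poly_Mapping.lookup l k)"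
  by (rule poly_mapping_eqI) (simp add: lookup_add lookup_minus lookup_single when_def)

lemma decompose:
  assumes vP: "varsin P (insert k I)" and k: "k \<notin> I"
  obtains N where "P = (\<Sum>i<N. dcp P k i * Xv k i)"
proof -
  define N where "N = Suc (\<Sum>l\<in>Poly_Mapping.keys P. Poly_Mapping.lookup l k)"
  have vd: "\<forall>i<N. varsin (dcp P k i) I" using dcp_varsin[OF vP k] by blast
  have "P = (\<Sum>i<N. dcp P k i * Xv k i)"
  proof (rule poly_mapping_eqI)
    fix l :: "nat \<Rightarrow>\<^sub>0 nat"
    define j where "j = Poly_Mapping.lookup l k"
    define \<mu> where "\<mu> = l - Poly_Mapping.single k j"
    have lam: "l = \<mu> + Poly_Mapping.single k j" unfolding \<mu>_def j_def by (rule split_k)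
    have mu0: "Poly_Mapping.lookup \<mu> k = 0" unfolding \<mu>_def j_def by (simp add: lookup_minus)
    have "Poly_Mapping.lookup (\<Sum>i<N. dcp P k i * Xv k i) l = (if j < N then Poly_Mapping.lookup (dcp P k j) \<mu> else 0)"
      unfolding lam by (rule LK[OF vd k mu0])
    also have "\<dots> = Poly_Mapping.lookup P l"
    proof (cases "j < N")
      case True
      then show ?thesis using mu0 lam by (simp add: lookup_dcp)
    next
      case False
      have "l \<notin> Poly_Mapping.keys P"
      proof
        assume "l \<in> Poly_Mapping.keys P"
        hence "j \<le> (\<Sum>l\<in>Poly_Mapping.keys P. Poly_Mapping.lookup l k)"
          unfolding j_def by (intro member_le_sum) auto
        thus False using False unfolding N_def by simp
      qed
      then show ?thesis using False by (simp add: in_keys_iff)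
    qed
    finally show "Poly_Mapping.lookup P l = Poly_Mapping.lookup (\<Sum>i<N. dcp P k i * Xv k i) l" by simp
  qed
  then show ?thesis using that by blast
qed

lemma indep_insert:
  assumes ind: "alg_indep_Q I x" and k: "k \<notin> I" and ncl: "x k \<notin> cl (x ` I)"
  shows "alg_indep_Q (insert k I) x"
  unfolding alg_indep_Q_def'
proof (intro allI impI)
  fix P assume vP: "varsin P (insert k I)" and e: "mpoly_eval P x = 0"
  obtain N where PN: "P = (\<Sum>i<N. dcp P k i * Xv k i)" using decompose[OF vP k] by blast
  have vd: "\<forall>i<N. varsin (dcp P k i) I" using dcp_varsin[OF vP k] by blast
  have e': "mpoly_eval (\<Sum>i<N. dcp P k i * Xv k i) x = 0" using e by (simp only: PN[symmetric])
  have sum0: "(\<Sum>i<N. mpoly_eval (dcp P k i) x * x k ^ i) = 0"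
    using e' by (simp only: compose_eval)
  have "\<forall>i<N. mpoly_eval (dcp P k i) x = 0"
  proof (rule ccontr)
    assume "\<not> (\<forall>i<N. mpoly_eval (dcp P k i) x = 0)"
    hence nz: "\<exists>i<N. mpoly_eval (dcp P k i) x \<noteq> 0" by blast
    have inK: "\<forall>i<N. mpoly_eval (dcp P k i) x \<in> gen_field (x ` I)"
      using vd RngI Rng_gen_field by blast
    have "algS (gen_field (x ` I)) (x k)" by (rule algSI[OF inK nz sum0])
    hence "x k \<in> cl (x ` I)" unfolding cl_def
      using alg_over_algS[OF sf_0[OF gen_field_subfield]] by blast
    thus False using ncl by blast
  qed
  hence "\<forall>i<N. dcp P k i = 0" using ind vd unfolding alg_indep_Q_def' by blast
  hence "(\<Sum>i<N. dcp P k i * Xv k i) = 0" by simp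
  with PN show "P = 0" by (rule trans)
qed

lemma indep_not_cl:
  assumes ind: "alg_indep_Q S x" and sub: "insert k I \<subseteq> S" and k: "k \<notin> I"
  shows "x k \<notin> cl (x ` I)"
proof
  assume xk: "x k \<in> cl (x ` I)"
  note R = ringlike_Rng[of x I]
  have "x ` I \<subseteq> fracs (Rng x I)" using x_in_Rng fracs_incl[OF R] by blast
  hence "gen_field (x ` I) \<subseteq> fracs (Rng x I)" by (rule gen_field_least[OF fracs_subfield[OF R]])
  hence "alg_over (fracs (Rng x I)) (x k)" using xk alg_over_mono unfolding cl_def by blast
  hence "algS (fracs (Rng x I)) (x k)" using alg_over_algS sf_0[OF fracs_subfield[OF R]] by blast
  hence "algS (Rng x I) (x k)" by (rule algS_clear[OF R])
  then obtain N c where c: "\<forall>i<N. c i \<in> Rng x I" "\<exists>i<N. c i \<noteq> 0" "(\<Sum>i<N. c i * x k ^ i) = 0"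
    unfolding algS_def by auto
  have "\<forall>i. \<exists>p. i < N \<longrightarrow> c i = mpoly_eval p x \<and> varsin p I"
    using c(1) unfolding Rng_def by blast
  then obtain p where p: "\<And>i. i < N \<Longrightarrow> c i = mpoly_eval (p i) x \<and> varsin (p i) I"
    by metis
  have vp: "\<forall>i<N. varsin (p i) I" using p by blast
  have "mpoly_eval (\<Sum>i<N. p i * Xv k i) x = (\<Sum>i<N. c i * x k ^ i)"
    unfolding compose_eval using p by simp
  hence "mpoly_eval (\<Sum>i<N. p i * Xv k i) x = 0" using c(3) by simp
  moreover have "varsin (\<Sum>i<N. p i * Xv k i) S"
    using compose_varsin[OF vp, of k] sub varsin_mono by blast
  ultimately have "(\<Sum>i<N. p i * Xv k i) = 0" using ind unfolding alg_indep_Q_def' by blast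
  hence "\<forall>i<N. p i = 0" by (rule compose_zero[OF vp k])
  hence "\<forall>i<N. c i = 0" using p by simp
  thus False using c(2) by blast
qed


lemma alg_indep_empty: "alg_indep_Q {} x"
  unfolding alg_indep_Q_def'
proof (intro allI impI)
  fix P assume v: "varsin P {}" and e: "mpoly_eval P x = 0"
  have k0: "Poly_Mapping.keys P \<subseteq> {0}" using v unfolding varsin_def by auto
  have "mpoly_eval P x = of_rat (Poly_Mapping.lookup P 0) * mon 0 x"
    using eval_superset[OF _ k0, of x] by simp
  hence l0: "Poly_Mapping.lookup P 0 = 0" using e by simp
  show "P = 0"
  proof (rule poly_mapping_eqI)
    fix \<mu>
    show "Poly_Mapping.lookup P \<mu> = Poly_Mapping.lookup 0 \<mu>"
      using k0 l0 by (cases "\<mu> \<in> Poly_Mapping.keys P") (auto simp: in_keys_iff)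
  qed
qed

lemma algebraic_cl: "algebraic (b::complex) \<Longrightarrow> b \<in> cl T"
proof -
  assume ab: "algebraic b"
  obtain p where p: "\<And>i. Polynomial.coeff p i \<in> \<int>" "p \<noteq> 0" "poly p b = 0"
    using algebraicE[OF ab] by blast
  have "\<forall>i. Polynomial.coeff p i \<in> gen_field T"
    using p(1) sf_of_int[OF gen_field_subfield] by (metis Ints_cases)
  hence "alg_over (gen_field T) b" unfolding alg_over_def using p by blast
  thus ?thesis unfolding cl_def by simp
qed

lemma distinct_nth_notin_take:
  "distinct xs \<Longrightarrow> j < length xs \<Longrightarrow> xs ! j \<notin> set (take j xs)"
proof -
  assume d: "distinct xs" and j: "j < length xs"
  have "xs ! j \<in> set (drop j xs)" using j by (metis Cons_nth_drop_Suc list.set_intros(1))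
  thus ?thesis using set_take_disj_set_drop_if_distinct[OF d, of j j] by blast
qed

lemma chain_bound:
  assumes S: "S \<subseteq> {..<n}" and cS: "card S = c" and ind: "alg_indep_Q S w"
    and T: "finite T" and W: "\<forall>i<n. w i \<in> cl T"
  shows "c \<le> card T"
proof -
  have finS: "finite S" using S finite_subset by blast
  define xs where "xs = sorted_list_of_set S"
  have dxs: "distinct xs" and sxs: "set xs = S" and lxs: "length xs = c"
    using finS cS unfolding xs_def by auto
  define s where "s = map w xs"
  have "\<forall>j<length s. s!j \<in> cl ({} \<union> T) \<and> s!j \<notin> cl ({} \<union> set (take j s))"
  proof (intro allI impI)
    fix j assume j: "j < length s"
    hence j': "j < length xs" unfolding s_def by simp
    have sj: "s ! j = w (xs ! j)" using j' unfolding s_def by simp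
    have "xs ! j \<in> S" using j' sxs nth_mem by blast
    hence "xs ! j < n" using S by blast
    hence "w (xs ! j) \<in> cl T" using W by blast
    hence "s ! j \<in> cl T" by (subst sj)
    moreover have "set (take j s) = w ` set (take j xs)" unfolding s_def by (simp add: take_map)
    moreover have "w (xs ! j) \<notin> cl (w ` set (take j xs))"
    proof (rule indep_not_cl[OF ind])
      show "insert (xs ! j) (set (take j xs)) \<subseteq> S"
      proof -
        have "set (take j xs) \<subseteq> S" using set_take_subset[of j xs] sxs by simp
        thus ?thesis using \<open>xs ! j \<in> S\<close> by simp
      qed
      show "xs ! j \<notin> set (take j xs)" by (rule distinct_nth_notin_take[OF dxs j'])
    qed
    ultimately show "s!j \<in> cl ({} \<union> T) \<and> s!j \<notin> cl ({} \<union> set (take j s))" using sj by simp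
  qed
  hence "length s \<le> card T" using steinitz[OF T] by blast
  thus ?thesis unfolding s_def using lxs by simp
qed

theorem lemma11p4:
  fixes b L :: complex and a :: "nat \<Rightarrow> complex" and m :: nat
  assumes schanuel: "Schanuel_conjecture"
    and b_alg: "algebraic b" and b0: "b \<noteq> 0" and b1: "b \<noteq> 1"
    and logb: "exp L = b"
    and ladder: "is_ladder L a m"
    and linind: "\<forall>q :: nat \<Rightarrow> rat. of_rat (q 0) + (\<Sum>i=1..m. of_rat (q i) * a i) = 0
                     \<longrightarrow> (\<forall>i\<in>{0..m}. q i = 0)"
  shows "(\<forall>k\<in>{1..m}. \<not> alg_over (ladder_field L a (k - 1)) (a k)
                   \<longleftrightarrow> alg_over (ladder_field L a (k - 1)) (cpow_L L (a k)))
       \<and> alg_indep_Q {0..m}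
           (\<lambda>k. if k = 0 then L
                 else if \<not> alg_over (ladder_field L a (k - 1)) (a k) then a k
                 else cpow_L L (a k))
       \<and> \<not> alg_over (ladder_field L a m) L"
proof -
  define F where "F k = ladder_field L a k" for k
  define bs where "bs k = (if \<not> alg_over (F (k - 1)) (a k) then a k else cpow_L L (a k))" for k
  define y where "y k = (if k = 0 then L else bs k)" for k
  have L0: "L \<noteq> 0" using logb b1 by auto
  define n where "n = Suc m"
  define z where "z i = (if i = 0 then L else a i * L)" for i
  have "lin_indep_Q n z"
    unfolding lin_indep_Q_def
  proof (intro allI impI)
    fix q :: "nat \<Rightarrow> rat" and i
    assume qz: "(\<Sum>i<n. of_rat (q i) * z i) = 0" and i: "i < n"
    have "(\<Sum>i<n. of_rat (q i) * z i) = of_rat (q 0) * L + (\<Sum>i<m. of_rat (q (Suc i)) * (a (Suc i) * L))"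
      unfolding n_def by (subst sum.lessThan_Suc_shift) (simp add: z_def)
    also have "\<dots> = L * (of_rat (q 0) + (\<Sum>i=1..m. of_rat (q i) * a i))"
      by (simp add: sum.atLeast1_atMost_eq sum_distrib_left distrib_left mult_ac)
    finally have "of_rat (q 0) + (\<Sum>i=1..m. of_rat (q i) * a i) = 0" using qz L0 by simp
    hence "\<forall>i\<in>{0..m}. q i = 0" using linind by blast
    thus "q i = 0" using i unfolding n_def by auto
  qed
  then obtain S where S: "S \<subseteq> {..<2*n}" "card S = n"
     "alg_indep_Q S (\<lambda>i. if i < n then z i else exp (z (i - n)))"
    using schanuel unfolding Schanuel_conjecture_def by blast
  define w where "w = (\<lambda>i. if i < n then z i else exp (z (i - n)))"
  have bound: "n \<le> card T" if "finite T" "\<forall>i<2*n. w i \<in> cl T" for T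
    using chain_bound[OF S(1,2) S(3)[folded w_def] that] .
  have Fsub: "F k \<subseteq> cl (bs ` ({1..k} - J))"
    if J: "\<forall>j\<in>J. alg_over (F (j - 1)) (a j) \<and> alg_over (F (j - 1)) (cpow_L L (a j))"
      and k: "k \<le> m" for J k
    using k
  proof (induction k)
    case 0
    have "F 0 = gen_field {}" unfolding F_def ladder_field_def by simp
    thus ?case using gen_field_cl[of "{}"] cl_mono[of "{}"] by blast
  next
    case (Suc k)
    define T' where "T' = bs ` ({1..Suc k} - J)"
    have "F k \<subseteq> cl (bs ` ({1..k} - J))" using Suc by simp
    also have "\<dots> \<subseteq> cl T'" unfolding T'_def by (rule cl_mono) auto
    finally have FkT: "F k \<subseteq> cl T'" .
    have gk: "a ` {1..k} \<union> (\<lambda>i. cpow_L L (a i)) ` {1..k} \<subseteq> F k"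
      unfolding F_def ladder_field_def by (rule gen_field_incl)
    have genk: "a i \<in> F k \<and> cpow_L L (a i) \<in> F k" if "i \<in> {1..k}" for i
      using that gk by blast
    have last: "e \<in> cl T'" if e: "e = a (Suc k) \<or> e = cpow_L L (a (Suc k))" for e
    proof (cases "alg_over (F k) e")
      case True
      then show ?thesis using cl_trans_field[OF _ FkT] gen_field_subfield unfolding F_def ladder_field_def by blast
    next
      case False
      have "Suc k \<notin> J" using J False e by auto
      have "Suc k \<in> {1..m}" using Suc.prems by simp
      from bspec[OF ladder[unfolded is_ladder_def] this]
      have lad: "alg_over (F k) (a (Suc k)) \<or> alg_over (F k) (cpow_L L (a (Suc k)))"
        unfolding F_def by simp
      have "e = bs (Suc k)" using e False lad unfolding bs_def by auto
      hence "e \<in> T'" unfolding T'_def using \<open>Suc k \<notin> J\<close> by auto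
      thus ?thesis using T_cl[of T'] by blast
    qed
    have "a ` {1..Suc k} \<union> (\<lambda>i. cpow_L L (a i)) ` {1..Suc k} \<subseteq> cl T'"
    proof
      fix e assume "e \<in> a ` {1..Suc k} \<union> (\<lambda>i. cpow_L L (a i)) ` {1..Suc k}"
      then obtain i where i: "i \<in> {1..Suc k}" "e = a i \<or> e = cpow_L L (a i)" by blast
      show "e \<in> cl T'"
      proof (cases "i = Suc k")
        case True then show ?thesis using last i by blast
      next
        case False
        then have "i \<in> {1..k}" using i by auto
        then show ?thesis using genk FkT i by blast
      qed
    qed
    hence "F (Suc k) \<subseteq> cl T'" unfolding F_def ladder_field_def by (rule gen_field_least[OF cl_subfield])
    thus ?case unfolding T'_def .
  qed
  have Wsub: "\<forall>i<2*n. w i \<in> cl (insert L (bs ` ({1..m} - J)))"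
    if J: "\<forall>j\<in>J. alg_over (F (j - 1)) (a j) \<and> alg_over (F (j - 1)) (cpow_L L (a j))" for J
  proof (intro allI impI)
    fix i assume i: "i < 2 * n"
    define T where "T = insert L (bs ` ({1..m} - J))"
    have FmT: "F m \<subseteq> cl T" using Fsub[OF J, of m] cl_mono[of "bs ` ({1..m} - J)" T] unfolding T_def by blast
    have LT: "L \<in> cl T" using T_cl[of T] unfolding T_def by simp
    have gk: "a ` {1..m} \<union> (\<lambda>i. cpow_L L (a i)) ` {1..m} \<subseteq> F m"
      unfolding F_def ladder_field_def by (rule gen_field_incl)
    have gm: "a j \<in> cl T \<and> cpow_L L (a j) \<in> cl T" if "j \<in> {1..m}" for j
      using that gk FmT by blast
    have zT: "z j \<in> cl T \<and> exp (z j) \<in> cl T" if "j < n" for j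
    proof (cases "j = 0")
      case True
      then show ?thesis using LT algebraic_cl[OF b_alg] logb unfolding z_def by simp
    next
      case False
      then have "j \<in> {1..m}" using that unfolding n_def by auto
      then show ?thesis using gm LT sf_mult[OF cl_subfield] unfolding z_def cpow_L_def using False by auto
    qed
    show "w i \<in> cl (insert L (bs ` ({1..m} - J)))"
      using zT i unfolding w_def T_def[symmetric] n_def by auto
  qed
  have cardT: "card (insert L (bs ` ({1..m} - J))) \<le> Suc (card ({1..m} - J))" for J
  proof -
    have "card (insert L (bs ` ({1..m} - J))) \<le> Suc (card (bs ` ({1..m} - J)))"
      by (simp add: card_insert_le_m1)
    also have "\<dots> \<le> Suc (card ({1..m} - J))" by (simp add: card_image_le)
    finally show ?thesis .
  qed
  have P1: "\<forall>k\<in>{1..m}. \<not> alg_over (F (k - 1)) (a k) \<longleftrightarrow> alg_over (F (k - 1)) (cpow_L L (a k))"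
  proof
    fix k assume k: "k \<in> {1..m}"
    have lad: "alg_over (F (k - 1)) (a k) \<or> alg_over (F (k - 1)) (cpow_L L (a k))"
      using ladder k unfolding is_ladder_def F_def by blast
    have "\<not> (alg_over (F (k - 1)) (a k) \<and> alg_over (F (k - 1)) (cpow_L L (a k)))"
    proof
      assume both: "alg_over (F (k - 1)) (a k) \<and> alg_over (F (k - 1)) (cpow_L L (a k))"
      have "\<forall>j\<in>{k}. alg_over (F (j - 1)) (a j) \<and> alg_over (F (j - 1)) (cpow_L L (a j))"
        using both by simp
      from Wsub[OF this] have "n \<le> card (insert L (bs ` ({1..m} - {k})))"
        by (intro bound) simp_all
      moreover have "card ({1..m} - {k}) = m - 1" using k by simp
      moreover have "m \<ge> 1" using k by simp
      ultimately show False using cardT[of "{k}"] unfolding n_def by simp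
    qed
    thus "\<not> alg_over (F (k - 1)) (a k) \<longleftrightarrow> alg_over (F (k - 1)) (cpow_L L (a k))" using lad by blast
  qed
  have P3: "\<not> alg_over (F m) L"
  proof
    assume La: "alg_over (F m) L"
    define T0 where "T0 = bs ` {1..m}"
    have FmT: "F m \<subseteq> cl T0" using Fsub[of "{}" m] unfolding T0_def by simp
    have "L \<in> cl T0"
      using cl_trans_field[OF _ FmT La] gen_field_subfield unfolding F_def ladder_field_def by blast
    hence "insert L T0 \<subseteq> cl T0" using T_cl[of T0] by simp
    hence "cl (insert L T0) \<subseteq> cl T0" by (rule cl_idem)
    moreover have "\<forall>i<2*n. w i \<in> cl (insert L T0)"
      using Wsub[of "{}"] unfolding T0_def by simp
    ultimately have "\<forall>i<2*n. w i \<in> cl T0" by blast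
    moreover have "finite T0" unfolding T0_def by simp
    ultimately have "n \<le> card T0" using bound by blast
    moreover have "card T0 \<le> m" unfolding T0_def using card_image_le[of "{1..m}" bs] by simp
    ultimately show False unfolding n_def by simp
  qed
  have Y: "y ` {0..m} = insert L (bs ` ({1..m} - {}))"
  proof -
    have "{0..m} = insert 0 {1..m}" by auto
    hence "y ` {0..m} = insert (y 0) (y ` {1..m})" by simp
    also have "y ` {1..m} = bs ` {1..m}" unfolding y_def by (rule image_cong) auto
    finally show ?thesis unfolding y_def by simp
  qed
  have ncl: "y k \<notin> cl (y ` {0..<k})" if k: "k \<le> m" for k
  proof
    assume yk: "y k \<in> cl (y ` {0..<k})"
    define T where "T = y ` ({0..m} - {k})"
    have "y ` {0..<k} \<subseteq> T" unfolding T_def using k by auto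
    hence ykT: "y k \<in> cl T" using yk cl_mono by blast
    have "insert (y k) T \<subseteq> cl T" using ykT T_cl[of T] by simp
    moreover have "y ` {0..m} \<subseteq> insert (y k) T" unfolding T_def by auto
    ultimately have "y ` {0..m} \<subseteq> cl T" by (rule subset_trans[rotated])
    hence "cl (y ` {0..m}) \<subseteq> cl T" by (rule cl_idem)
    moreover have "\<forall>i<2*n. w i \<in> cl (y ` {0..m})"
      unfolding Y using Wsub[of "{}"] by blast
    ultimately have "\<forall>i<2*n. w i \<in> cl T" by blast
    moreover have "finite T" unfolding T_def by simp
    ultimately have "n \<le> card T" using bound by blast
    moreover have "card T \<le> m"
    proof -
      have "card T \<le> card ({0..m} - {k})" unfolding T_def by (rule card_image_le) simp
      also have "\<dots> = m" using k by simp
      finally show ?thesis .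
    qed
    ultimately show False unfolding n_def by simp
  qed
  have P2': "alg_indep_Q {0..<k} y" if "k \<le> Suc m" for k
    using that
  proof (induction k)
    case 0
    then show ?case using alg_indep_empty by simp
  next
    case (Suc k)
    then have "alg_indep_Q (insert k {0..<k}) y" using indep_insert[OF _ _ ncl] by simp
    moreover have "insert k {0..<k} = {0..<Suc k}" by auto
    ultimately show ?case by simp
  qed
  have P2: "alg_indep_Q {0..m} y" using P2'[of "Suc m"] by (simp add: atLeastLessThanSuc_atLeastAtMost)
  have yeq: "y = (\<lambda>k. if k = 0 then L
                 else if \<not> alg_over (ladder_field L a (k - 1)) (a k) then a k
                 else cpow_L L (a k))"
    unfolding y_def bs_def F_def by auto
  show ?thesis using P1 P2 P3 unfolding yeq F_def by blast
qed


end
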